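(* For every integer $n\geqslant 1$, let $G_n$ be the complete directed graph on $n$ vertices (vertex set $[n]$, with a directed edge $\overrightarrow{xy}$ for every ordered pair $x\neq y$). Then for all $k=0,1,\ldots,n-1$, $$h_k(\Delta(G_n))={n-1\choose k}(n-1)^k .$$
   Context: For a finite directed graph $D$ (no loops, no multiple edges), the complex of directed trees $\Delta(D)$ is the simplicial complex whose vertices are the directed edges of $D$ and whose faces are the sets of directed edges of $D$ forming a directed forest, i.e. a vertex-disjoint union of rooted directed trees (a rooted directed tree with root $r$ is an acyclic digraph in which every vertex is reached from $r$ by a unique directed path); equivalently, a set of edges in which every vertex has in-degree at most $1$ and there is no directed cycle. For a $d$-dimensional simplicial complex $\Delta$ with $f_i$ faces of dimension $i$ ($f_{-1}=1$), the $h$-vector $(h_0,\ldots,h_{d+1})$ is defined by $h_k=\sum_{i=0}^{k}(-1)^{k-i}{d+1-i\choose d+1-k}f_{i-1}$. The complex $\Delta(G_n)$ has dimension $n-2$. *)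

theory Defs
  imports Main
begin

text \<open>A finite digraph is represented by its set of directed edges; an edge (x,y) goes from x to y.\<close>

definition complete_digraph :: "nat \<Rightarrow> (nat \<times> nat) set" where
  "complete_digraph n = {(x, y). x \<in> {1..n} \<and> y \<in> {1..n} \<and> x \<noteq> y}"

definition is_directed_forest :: "('a \<times> 'a) set \<Rightarrow> bool" where
  "is_directed_forest F \<longleftrightarrow> (\<forall>y. card {x. (x, y) \<in> F} \<le> 1 \<and> finite {x. (x, y) \<in> F}) \<and> acyclic F"

definition complex_of_directed_trees :: "('a \<times> 'a) set \<Rightarrow> ('a \<times> 'a) set set" where
  "complex_of_directed_trees D = {F. F \<subseteq> D \<and> is_directed_forest F}"

text \<open>f_{i-1}: number of faces with i vertices (i.e. of dimension i-1).\<close>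
definition face_count :: "'v set set \<Rightarrow> nat \<Rightarrow> nat" where
  "face_count K i = card {F \<in> K. card F = i}"

definition dim_plus_one :: "'v set set \<Rightarrow> nat" where
  "dim_plus_one K = Max (card ` K)"

definition h_vector :: "'v set set \<Rightarrow> nat \<Rightarrow> int" where
  "h_vector K k = (\<Sum>i = 0..k. (-1) ^ (k - i) * int ((dim_plus_one K - i) choose (dim_plus_one K - k))
                      * int (face_count K i))"

end

theory Submission
  imports Defs
begin

lemma D_sub: "complete_digraph n \<subseteq> {1..n} \<times> {1..n}"
  unfolding complete_digraph_def by auto

lemma finite_D: "finite (complete_digraph n)"
  using D_sub finite_subset by blast

lemma forest_sub:
  assumes "is_directed_forest F" "G \<subseteq> F"
  shows "is_directed_forest G"
  unfolding is_directed_forest_def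
proof (intro conjI allI)
  fix y
  have f: "finite {x. (x, y) \<in> F}" "card {x. (x, y) \<in> F} \<le> 1"
    using assms(1) unfolding is_directed_forest_def by auto
  have s: "{x. (x, y) \<in> G} \<subseteq> {x. (x, y) \<in> F}" using assms(2) by auto
  show "finite {x. (x, y) \<in> G}" using f s finite_subset by blast
  show "card {x. (x, y) \<in> G} \<le> 1" using card_mono[OF f(1) s] f(2) by linarith
  show "acyclic G" using assms acyclic_subset unfolding is_directed_forest_def by blast
qed

lemma forest_inj:
  assumes "is_directed_forest F"
  shows "inj_on snd F"
proof (rule inj_onI)
  fix a b assume ab: "a \<in> F" "b \<in> F" "snd a = snd b"
  obtain x y where a: "a = (x, y)" by (cases a)
  obtain x' y' where b: "b = (x', y')" by (cases b)
  have "finite {z. (z, y) \<in> F}" "card {z. (z, y) \<in> F} \<le> Suc 0"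
    using assms unfolding is_directed_forest_def by auto
  then have "\<forall>u\<in>{z. (z, y) \<in> F}. \<forall>v\<in>{z. (z, y) \<in> F}. u = v"
    using card_le_Suc0_iff_eq by blast
  then show "a = b" using ab a b by auto
qed

lemma forest_empty: "is_directed_forest {}"
  unfolding is_directed_forest_def acyclic_def by auto

lemma forest_insert:
  assumes "is_directed_forest F" "finite F" "y \<notin> snd ` F" "(y, x) \<notin> F\<^sup>*"
  shows "is_directed_forest (insert (x, y) F)"
  unfolding is_directed_forest_def
proof (intro conjI allI)
  fix w
  show "finite {z. (z, w) \<in> insert (x, y) F}"
    by (rule finite_subset[of _ "fst ` insert (x,y) F"]) (auto simp: assms(2) image_iff, force)
  show "card {z. (z, w) \<in> insert (x, y) F} \<le> 1"
  proof (cases "w = y")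
    case True
    then have "{z. (z, w) \<in> insert (x, y) F} = {x}" using assms(3) by force
    then show ?thesis by simp
  next
    case False
    then have "{z. (z, w) \<in> insert (x, y) F} = {z. (z, w) \<in> F}" by auto
    then show ?thesis using assms(1) unfolding is_directed_forest_def by simp
  qed
  show "acyclic (insert (x, y) F)" using assms(1,4) unfolding is_directed_forest_def by simp
qed

lemma forest_insert_D:
  assumes "is_directed_forest (insert (x, y) F)" "(x, y) \<notin> F"
  shows "y \<notin> snd ` F" "(y, x) \<notin> F\<^sup>*"
proof -
  show "(y, x) \<notin> F\<^sup>*" using assms(1) unfolding is_directed_forest_def by simp
  show "y \<notin> snd ` F"
  proof
    assume "y \<in> snd ` F"
    then obtain z where z: "(z, y) \<in> F" by force
    have "inj_on snd (insert (x, y) F)" using forest_inj[OF assms(1)] .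
    then have "(z, y) = (x, y)" using z inj_onD[of snd "insert (x, y) F" "(z,y)" "(x,y)"] by auto
    then show False using z assms(2) by simp
  qed
qed

lemma root_exists:
  assumes FD: "F \<subseteq> complete_digraph n" and ff: "is_directed_forest F"
  shows "v \<in> {1..n} \<Longrightarrow> \<exists>r \<in> {1..n} - snd ` F. (r, v) \<in> F\<^sup>*"
proof -
  have fin: "finite F" using FD finite_D finite_subset by blast
  have wf: "wf F" using finite_acyclic_wf[OF fin] ff unfolding is_directed_forest_def by blast
  show "v \<in> {1..n} \<Longrightarrow> \<exists>r \<in> {1..n} - snd ` F. (r, v) \<in> F\<^sup>*"
  proof (induction v rule: wf_induct[OF wf])
    case (1 v)
    show ?case
    proof (cases "v \<in> snd ` F")
      case True
      then obtain p where p: "(p, v) \<in> F" by force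
      then have "p \<in> {1..n}" using FD D_sub by blast
      then obtain r where "r \<in> {1..n} - snd ` F" "(r, p) \<in> F\<^sup>*" using 1 p by blast
      then show ?thesis using p by (meson rtrancl.rtrancl_into_rtrancl)
    next
      case False
      then show ?thesis using 1 by blast
    qed
  qed
qed

lemma root_unique:
  assumes FD: "F \<subseteq> complete_digraph n" and ff: "is_directed_forest F"
  shows "\<forall>r1 r2. r1 \<in> {1..n} - snd ` F \<longrightarrow> r2 \<in> {1..n} - snd ` F \<longrightarrow> (r1, v) \<in> F\<^sup>* \<longrightarrow> (r2, v) \<in> F\<^sup>* \<longrightarrow> r1 = r2"
proof -
  have fin: "finite F" using FD finite_D finite_subset by blast
  have wf: "wf F" using finite_acyclic_wf[OF fin] ff unfolding is_directed_forest_def by blast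
  have inj: "inj_on snd F" using forest_inj[OF ff] .
  show ?thesis
  proof (induction v rule: wf_induct[OF wf])
    case (1 v)
    show ?case
    proof (intro allI impI)
      fix r1 r2 assume r1: "r1 \<in> {1..n} - snd ` F" and r2: "r2 \<in> {1..n} - snd ` F"
        and p1: "(r1, v) \<in> F\<^sup>*" and p2: "(r2, v) \<in> F\<^sup>*"
      from p1 show "r1 = r2"
      proof (cases rule: rtranclE)
        case base
        from p2 show ?thesis
        proof (cases rule: rtranclE)
          case (step y)
          then show ?thesis using r1 base by force
        qed (use base in simp)
      next
        case (step y1)
        note s1 = step
        from p2 show ?thesis
        proof (cases rule: rtranclE)
          case base
          then show ?thesis using r2 s1 by force
        next
          case (step y2)
          have "y1 = y2" using inj s1(2) step(2) inj_onD[of snd F "(y1,v)" "(y2,v)"] by auto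
          then show ?thesis using 1 step s1 r1 r2 by blast
        qed
      qed
    qed
  qed
qed

lemma card_add:
  assumes FD: "F \<subseteq> complete_digraph n" and ff: "is_directed_forest F" and n1: "n \<ge> 1"
  shows "card {e \<in> complete_digraph n. e \<notin> F \<and> is_directed_forest (insert e F)} = n * (n - 1 - card F)"
proof -
  define R where "R = {1..n} - snd ` F"
  define T where "T y = {x\<in>{1..n}. (y, x) \<in> F\<^sup>*}" for y
  have fin: "finite F" using FD finite_D finite_subset by blast
  have FV: "F \<subseteq> {1..n} \<times> {1..n}" using FD D_sub by blast
  have eq: "{e \<in> complete_digraph n. e \<notin> F \<and> is_directed_forest (insert e F)}
      = (\<lambda>(y,x). (x,y)) ` (SIGMA y:R. {1..n} - T y)"
  proof (rule set_eqI, rule iffI)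
    fix e assume e: "e \<in> {e \<in> complete_digraph n. e \<notin> F \<and> is_directed_forest (insert e F)}"
    obtain x y where exy: "e = (x, y)" by (cases e)
    have d: "y \<notin> snd ` F" "(y, x) \<notin> F\<^sup>*" using forest_insert_D[of x y F] e exy by auto
    have "x \<in> {1..n}" "y \<in> {1..n}" using e exy D_sub by blast+
    then have "(y, x) \<in> (SIGMA y:R. {1..n} - T y)" using d unfolding R_def T_def by auto
    then show "e \<in> (\<lambda>(y,x). (x,y)) ` (SIGMA y:R. {1..n} - T y)" using exy by force
  next
    fix e assume "e \<in> (\<lambda>(y,x). (x,y)) ` (SIGMA y:R. {1..n} - T y)"
    then obtain x y where exy: "e = (x, y)" and y: "y \<in> R" and x: "x \<in> {1..n}" "(y, x) \<notin> F\<^sup>*"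
      unfolding T_def by force
    have "x \<noteq> y" using x by auto
    then have "e \<in> complete_digraph n" using x y exy unfolding R_def complete_digraph_def by auto
    moreover have "e \<notin> F" using y exy unfolding R_def by force
    moreover have "is_directed_forest (insert e F)"
      using forest_insert[OF ff fin, of y x] y x exy unfolding R_def by auto
    ultimately show "e \<in> {e \<in> complete_digraph n. e \<notin> F \<and> is_directed_forest (insert e F)}" by blast
  qed
  have finR: "finite R" unfolding R_def by simp
  have TV: "T y \<subseteq> {1..n}" for y unfolding T_def by auto
  have c1: "card ((\<lambda>(y,x). (x,y)) ` (SIGMA y:R. {1..n} - T y)) = card (SIGMA y:R. {1..n} - T y)"
    by (rule card_image) (auto simp: inj_on_def)
  have c2: "card (SIGMA y:R. {1..n} - T y) = (\<Sum>y\<in>R. n - card (T y))"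
  proof -
    have "card ({1..n} - T y) = n - card (T y)" for y
      using TV[of y] by (simp add: card_Diff_subset finite_subset)
    then show ?thesis using finR by simp
  qed
  have c3: "(\<Sum>y\<in>R. n - card (T y)) = (\<Sum>y\<in>R. n) - (\<Sum>y\<in>R. card (T y))"
    by (rule sum_subtractf_nat) (metis TV card_atLeastAtMost card_mono diff_Suc_1 finite_atLeastAtMost)
  have bij: "bij_betw snd (SIGMA y:R. T y) {1..n}"
  proof (rule bij_betw_imageI)
    show "inj_on snd (SIGMA y:R. T y)"
    proof (rule inj_onI)
      fix a b assume a: "a \<in> (SIGMA y:R. T y)" and b: "b \<in> (SIGMA y:R. T y)" and s: "snd a = snd b"
      have "fst a = fst b" using root_unique[OF FD ff, of "snd a"] a b s unfolding R_def T_def by auto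
      then show "a = b" using s by (simp add: prod_eq_iff)
    qed
    show "snd ` (SIGMA y:R. T y) = {1..n}"
    proof
      show "snd ` (SIGMA y:R. T y) \<subseteq> {1..n}" using TV by fastforce
      show "{1..n} \<subseteq> snd ` (SIGMA y:R. T y)"
      proof
        fix v assume v: "v \<in> {1..n}"
        then obtain r where "r \<in> R" "(r, v) \<in> F\<^sup>*" using root_exists[OF FD ff] unfolding R_def by blast
        then have "(r, v) \<in> (SIGMA y:R. T y)" using v unfolding T_def by auto
        then show "v \<in> snd ` (SIGMA y:R. T y)" by force
      qed
    qed
  qed
  have c4: "(\<Sum>y\<in>R. card (T y)) = n"
  proof -
    have "\<forall>a\<in>R. finite (T a)" using TV finite_subset by blast
    then show ?thesis using bij_betw_same_card[OF bij] card_SigmaI[OF finR, of T] by simp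
  qed
  have cR: "card R = n - card F"
  proof -
    have "card (snd ` F) = card F" using card_image[OF forest_inj[OF ff]] .
    moreover have "snd ` F \<subseteq> {1..n}" using FV by auto
    ultimately show ?thesis unfolding R_def by (simp add: card_Diff_subset fin)
  qed
  have "card F < n"
  proof -
    obtain r where "r \<in> R" using root_exists[OF FD ff, of 1] n1 unfolding R_def by auto
    then have "card R > 0" using finR card_gt_0_iff by blast
    then show ?thesis using cR by simp
  qed
  have "card {e \<in> complete_digraph n. e \<notin> F \<and> is_directed_forest (insert e F)} = card R * n - n"
    using eq c1 c2 c3 c4 by simp
  also have "\<dots> = n * (n - 1 - card F)" using cR by (simp add: algebra_simps diff_mult_distrib2)
  finally show ?thesis .
qed

lemma finite_K: "finite (complex_of_directed_trees (complete_digraph n))"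
  by (rule finite_subset[of _ "Pow (complete_digraph n)"])
     (auto simp: complex_of_directed_trees_def finite_D)

lemma fc_rec:
  assumes n1: "n \<ge> 1"
  defines "K \<equiv> complex_of_directed_trees (complete_digraph n)"
  shows "Suc i * face_count K (Suc i) = face_count K i * (n * (n - 1 - i))"
proof -
  define Fs where "Fs j = {F \<in> K. card F = j}" for j
  define ad where "ad F = {e \<in> complete_digraph n. e \<notin> F \<and> is_directed_forest (insert e F)}" for F
  have finK: "finite K" unfolding K_def by (rule finite_K)
  have finFs: "finite (Fs j)" for j unfolding Fs_def using finK by simp
  have memK: "F \<in> K \<longleftrightarrow> F \<subseteq> complete_digraph n \<and> is_directed_forest F" for F
    unfolding K_def complex_of_directed_trees_def by simp
  have finF: "F \<in> K \<Longrightarrow> finite F" for F using memK finite_D finite_subset by blast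
  have cA: "card (SIGMA F:Fs (Suc i). F) = Suc i * face_count K (Suc i)"
  proof -
    have "card (SIGMA F:Fs (Suc i). F) = (\<Sum>F\<in>Fs (Suc i). card F)"
      by (rule card_SigmaI) (use finFs finF Fs_def in auto)
    also have "\<dots> = (\<Sum>F\<in>Fs (Suc i). Suc i)" by (rule sum.cong) (auto simp: Fs_def)
    also have "\<dots> = Suc i * face_count K (Suc i)" by (simp add: face_count_def Fs_def)
    finally show ?thesis .
  qed
  have cB: "card (SIGMA F:Fs i. ad F) = face_count K i * (n * (n - 1 - i))"
  proof -
    have "card (SIGMA F:Fs i. ad F) = (\<Sum>F\<in>Fs i. card (ad F))"
      by (rule card_SigmaI) (use finFs finite_D ad_def in auto)
    also have "\<dots> = (\<Sum>F\<in>Fs i. n * (n - 1 - i))"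
      by (rule sum.cong) (use card_add[OF _ _ n1] memK in \<open>auto simp: Fs_def ad_def\<close>)
    also have "\<dots> = face_count K i * (n * (n - 1 - i))" by (simp add: face_count_def Fs_def)
    finally show ?thesis .
  qed
  have bij: "bij_betw (\<lambda>(F, e). (F - {e}, e)) (SIGMA F:Fs (Suc i). F) (SIGMA F:Fs i. ad F)"
  proof (rule bij_betw_imageI)
    show "inj_on (\<lambda>(F, e). (F - {e}, e)) (SIGMA F:Fs (Suc i). F)"
      unfolding inj_on_def by clarsimp (metis insert_Diff)
    show "(\<lambda>(F, e). (F - {e}, e)) ` (SIGMA F:Fs (Suc i). F) = (SIGMA F:Fs i. ad F)"
    proof
      show "(\<lambda>(F, e). (F - {e}, e)) ` (SIGMA F:Fs (Suc i). F) \<subseteq> (SIGMA F:Fs i. ad F)"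
      proof
        fix p assume "p \<in> (\<lambda>(F, e). (F - {e}, e)) ` (SIGMA F:Fs (Suc i). F)"
        then obtain F e where p: "p = (F - {e}, e)" and F: "F \<in> Fs (Suc i)" and e: "e \<in> F" by auto
        have FK: "F \<subseteq> complete_digraph n" "is_directed_forest F" "card F = Suc i" "finite F"
          using F memK finF unfolding Fs_def by auto
        have "F - {e} \<in> Fs i" using FK forest_sub[OF FK(2)] e unfolding Fs_def memK by auto
        moreover have "e \<in> ad (F - {e})" using FK e unfolding ad_def by (auto simp: insert_absorb)
        ultimately show "p \<in> (SIGMA F:Fs i. ad F)" using p by simp
      qed
      show "(SIGMA F:Fs i. ad F) \<subseteq> (\<lambda>(F, e). (F - {e}, e)) ` (SIGMA F:Fs (Suc i). F)"
      proof
        fix p assume "p \<in> (SIGMA F:Fs i. ad F)"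
        then obtain F e where p: "p = (F, e)" and F: "F \<in> Fs i" and e: "e \<in> ad F" by auto
        have FK: "F \<subseteq> complete_digraph n" "card F = i" "finite F"
          using F memK finF unfolding Fs_def by auto
        have e2: "e \<in> complete_digraph n" "e \<notin> F" "is_directed_forest (insert e F)"
          using e unfolding ad_def by auto
        have "insert e F \<in> Fs (Suc i)" using FK e2 unfolding Fs_def memK by auto
        moreover have "F = insert e F - {e}" using e2 by auto
        ultimately show "p \<in> (\<lambda>(F, e). (F - {e}, e)) ` (SIGMA F:Fs (Suc i). F)" unfolding p
          by (intro image_eqI[of _ _ "(insert e F, e)"]) auto
      qed
    qed
  qed
  show ?thesis using bij_betw_same_card[OF bij] cA cB by simp
qed

lemma fc_closed:
  assumes n1: "n \<ge> 1"
  defines "K \<equiv> complex_of_directed_trees (complete_digraph n)"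
  shows "face_count K i = ((n - 1) choose i) * n ^ i"
proof (induction i)
  case 0
  have "{F \<in> K. card F = 0} = {{}}"
    using finite_D forest_empty by (auto simp: K_def complex_of_directed_trees_def finite_subset)
  then show ?case by (simp add: face_count_def)
next
  case (Suc i)
  have "Suc i * face_count K (Suc i) = ((n - 1) choose i) * n ^ i * (n * (n - 1 - i))"
    using fc_rec[OF n1, of i] Suc unfolding K_def by simp
  also have "\<dots> = ((n - 1 - i) * ((n - 1) choose i)) * n ^ Suc i" by (simp add: algebra_simps)
  also have "\<dots> = (Suc i * ((n - 1) choose Suc i)) * n ^ Suc i"
  proof -
    have "(n - 1 - i) * ((n - 1) choose i) = Suc i * ((n - 1) choose Suc i)"
      using binomial_absorb_comp[of "n-1" i] binomial_absorption[of i "n-1"] by simp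
    then show ?thesis by simp
  qed
  finally have "Suc i * face_count K (Suc i) = Suc i * (((n - 1) choose Suc i) * n ^ Suc i)"
    by (simp only: mult.assoc)
  then show ?case by (simp only: mult_cancel1) simp
qed

lemma dim_K:
  assumes n1: "n \<ge> 1"
  defines "K \<equiv> complex_of_directed_trees (complete_digraph n)"
  shows "dim_plus_one K = n - 1"
proof -
  have finK: "finite K" unfolding K_def by (rule finite_K)
  have fc: "card {F \<in> K. card F = j} = ((n - 1) choose j) * n ^ j" for j
    using fc_closed[OF n1] unfolding K_def face_count_def by simp
  have "n - 1 \<in> card ` K"
  proof -
    have "card {F \<in> K. card F = n - 1} > 0" using fc[of "n-1"] n1 by simp
    then obtain F where "F \<in> K" "card F = n - 1" by (metis (mono_tags, lifting) card.empty empty_iff less_irrefl mem_Collect_eq subsetI subset_empty)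
    then show ?thesis by force
  qed
  moreover have "c \<le> n - 1" if cK: "c \<in> card ` K" for c
  proof -
    obtain F where F: "F \<in> K" "card F = c" using cK by force
    have "{F \<in> K. card F = c} \<noteq> {}" using F by blast
    then have "card {F \<in> K. card F = c} > 0" using finK by (simp add: card_gt_0_iff)
    then have "(n - 1) choose c > 0" using fc[of c] by simp
    then show ?thesis by simp
  qed
  ultimately show ?thesis unfolding dim_plus_one_def using finK
    by (intro Max_eqI) auto
qed

theorem mainTheorem1:
  fixes n k :: nat
  assumes "n \<ge> 1" and "k \<le> n - 1"
  shows "h_vector (complex_of_directed_trees (complete_digraph n)) k
           = int ((n - 1) choose k) * int (n - 1) ^ k"
proof -
  define K where "K = complex_of_directed_trees (complete_digraph n)"
  define m where "m = n - 1"
  have km: "k \<le> m" using assms m_def by simp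
  have d: "dim_plus_one K = m" using dim_K[OF assms(1)] unfolding K_def m_def .
  have fc: "face_count K i = (m choose i) * n ^ i" for i
    using fc_closed[OF assms(1)] unfolding K_def m_def by simp
  have tm: "((m - i) choose (m - k)) * (m choose i) = (m choose k) * (k choose i)" if "i \<le> k" for i
  proof -
    have "(m - i) choose (m - k) = (m - i) choose (k - i)"
      using binomial_symmetric[of "k - i" "m - i"] that km by simp
    then show ?thesis using choose_mult[OF that km] by (simp add: mult.commute)
  qed
  have "h_vector K k = (\<Sum>i = 0..k. (-1) ^ (k - i) * int ((m - i) choose (m - k)) * int ((m choose i) * n ^ i))"
    unfolding h_vector_def d fc ..
  also have "\<dots> = (\<Sum>i = 0..k. int (m choose k) * (int (k choose i) * int n ^ i * (-1) ^ (k - i)))"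
  proof (rule sum.cong)
    fix i assume "i \<in> {0..k}"
    then have "int ((m - i) choose (m - k)) * int (m choose i) = int (m choose k) * int (k choose i)"
      using tm[of i] by (metis atLeastAtMost_iff of_nat_mult)
    then show "(-1) ^ (k - i) * int ((m - i) choose (m - k)) * int ((m choose i) * n ^ i)
        = int (m choose k) * (int (k choose i) * int n ^ i * (-1) ^ (k - i))"
      by (simp add: algebra_simps)
  qed simp
  also have "\<dots> = int (m choose k) * (\<Sum>i\<le>k. int (k choose i) * int n ^ i * (-1) ^ (k - i))"
    by (simp add: sum_distrib_left atLeast0AtMost)
  also have "\<dots> = int (m choose k) * (int n + (-1)) ^ k"
    using binomial_ring[of "int n" "-1" k] by simp
  also have "\<dots> = int (m choose k) * int m ^ k" using assms(1) m_def by (simp add: of_nat_diff)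
  finally show ?thesis unfolding K_def m_def .
qed

end
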